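(* Let $A \in \{0,1\}^{X\times Y}$ be a combinatorial channel and let $t \in \mathbb{R}^Y$ with $t \ge \mathbf{0}$ and $(At)_x > 0$ for all $x \in X$. Let $d \in \mathbb{R}$ and define $X_- = \{x \in X : (At)_x < d\}$ and $X_0 = \{x \in X : (At)_x = d\}$. Suppose \[ \mathbf{1}_{X_-}^T A t \ \le\ \mathbf{1}^T t \ \le\ (\mathbf{1}_{X_-} + \mathbf{1}_{X_0})^T A t. \] Define $z \in \mathbb{R}^Y$ by \[ z_y = t_y\left(\frac{1}{d} + \sum_{x \in N(y)} \max\left(\frac{1}{(At)_x} - \frac{1}{d},\ 0\right)\right). \] Then $z$ is feasible for $\kappa^*(A)$ (i.e. $z \ge \mathbf{0}$ and $Az \ge \mathbf{1}$), $p^*_{\textsc{dsu}}(A,t) = \mathbf{1}^T z$, and $\varphi_A(t) \le z$ entrywise. Consequently $\kappa^*_{\textsc{ldu}}(A,t) \le p^*_{\textsc{dsu}}(A,t)$.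
   Context: A combinatorial channel is a matrix $A \in \{0,1\}^{X\times Y}$ ($X,Y$ finite) in which every row and column contains a $1$. For $y \in Y$, $N(y) = \{x : A_{x,y}=1\}$. For $S \subseteq X$, $\mathbf{1}_S$ is its indicator vector. $\kappa^*(A) = \min\{\mathbf{1}^T z : z\ge \mathbf{0},\ Az \ge \mathbf{1}\}$. The degree sequence bound is $p^*_{\textsc{dsu}}(A,t) = \max\{\mathbf{1}^T w : w \in \mathbb{R}^X,\ \mathbf{0} \le w \le \mathbf{1},\ t^T A^T w \le t^T \mathbf{1}\}$. For $t$ with $At > \mathbf{0}$, $\varphi_A(t)_y = t_y / \min_{x \in N(y)} (At)_x$, and the local degree upper bound is $\kappa^*_{\textsc{ldu}}(A,t) = \mathbf{1}^T \varphi_A(t)$. *)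

theory Defs
  imports Complex_Main
begin

definition comb_channel :: "('x::finite \<Rightarrow> 'y::finite \<Rightarrow> real) \<Rightarrow> bool" where
  "comb_channel A \<longleftrightarrow> (\<forall>x y. A x y = 0 \<or> A x y = 1)
     \<and> (\<forall>x. \<exists>y. A x y = 1) \<and> (\<forall>y. \<exists>x. A x y = 1)"

definition mvec :: "('x::finite \<Rightarrow> 'y::finite \<Rightarrow> real) \<Rightarrow> ('y \<Rightarrow> real) \<Rightarrow> 'x \<Rightarrow> real" where
  "mvec A t x = (\<Sum>y\<in>UNIV. A x y * t y)"

definition tvec :: "('x::finite \<Rightarrow> 'y::finite \<Rightarrow> real) \<Rightarrow> ('x \<Rightarrow> real) \<Rightarrow> 'y \<Rightarrow> real" where
  "tvec A w y = (\<Sum>x\<in>UNIV. A x y * w x)"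

definition nbhd :: "('x \<Rightarrow> 'y \<Rightarrow> real) \<Rightarrow> 'y \<Rightarrow> 'x set" where
  "nbhd A y = {x. A x y = 1}"

definition kappa_feasible :: "('x::finite \<Rightarrow> 'y::finite \<Rightarrow> real) \<Rightarrow> ('y \<Rightarrow> real) \<Rightarrow> bool" where
  "kappa_feasible A z \<longleftrightarrow> (\<forall>y. z y \<ge> 0) \<and> (\<forall>x. mvec A z x \<ge> 1)"

definition p_dsu :: "('x::finite \<Rightarrow> 'y::finite \<Rightarrow> real) \<Rightarrow> ('y \<Rightarrow> real) \<Rightarrow> real" where
  "p_dsu A t = Sup {(\<Sum>x\<in>UNIV. w x) | w. (\<forall>x. 0 \<le> w x \<and> w x \<le> 1)
        \<and> (\<Sum>y\<in>UNIV. t y * tvec A w y) \<le> (\<Sum>y\<in>UNIV. t y)}"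

definition phi :: "('x::finite \<Rightarrow> 'y::finite \<Rightarrow> real) \<Rightarrow> ('y \<Rightarrow> real) \<Rightarrow> 'y \<Rightarrow> real" where
  "phi A t y = t y / Min (mvec A t ` nbhd A y)"

definition kappa_ldu :: "('x::finite \<Rightarrow> 'y::finite \<Rightarrow> real) \<Rightarrow> ('y \<Rightarrow> real) \<Rightarrow> real" where
  "kappa_ldu A t = (\<Sum>y\<in>UNIV. phi A t y)"

end

theory Submission
  imports Defs
begin

lemma sum_nbhd:
  assumes "comb_channel A"
  shows "(\<Sum>x\<in>nbhd A y. g x) = (\<Sum>x\<in>UNIV. A x y * g x)"
proof -
  have "(\<Sum>x\<in>UNIV. A x y * g x) = (\<Sum>x\<in>UNIV. if x \<in> nbhd A y then g x else 0)"
  proof (rule sum.cong[OF refl])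
    fix x
    have "A x y = 0 \<or> A x y = 1" using assms by (simp add: comb_channel_def)
    thus "A x y * g x = (if x \<in> nbhd A y then g x else 0)" by (auto simp: nbhd_def)
  qed
  also have "\<dots> = (\<Sum>x\<in>nbhd A y. g x)" by (simp add: sum.If_cases)
  finally show ?thesis by simp
qed

lemma swap_tvec: "(\<Sum>y\<in>UNIV. t y * tvec A w y) = (\<Sum>x\<in>UNIV. w x * mvec A t x)"
proof -
  have "(\<Sum>y\<in>UNIV. t y * tvec A w y) = (\<Sum>y\<in>UNIV. \<Sum>x\<in>UNIV. t y * (A x y * w x))"
    unfolding tvec_def by (simp add: sum_distrib_left)
  also have "\<dots> = (\<Sum>x\<in>UNIV. \<Sum>y\<in>UNIV. t y * (A x y * w x))" by (rule sum.swap)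
  also have "\<dots> = (\<Sum>x\<in>UNIV. w x * mvec A t x)"
    unfolding mvec_def by (simp add: sum_distrib_left mult_ac)
  finally show ?thesis .
qed

theorem theorem4:
  fixes A :: "'x::finite \<Rightarrow> 'y::finite \<Rightarrow> real"
    and t :: "'y \<Rightarrow> real" and d :: real
    and Xm X0 :: "'x set" and z :: "'y \<Rightarrow> real"
  assumes chan: "comb_channel A"
    and tnn: "\<forall>y. t y \<ge> 0"
    and Atpos: "\<forall>x. mvec A t x > 0"
    and Xm_def: "Xm = {x. mvec A t x < d}"
    and X0_def: "X0 = {x. mvec A t x = d}"
    and low: "(\<Sum>x\<in>Xm. mvec A t x) \<le> (\<Sum>y\<in>UNIV. t y)"
    and up: "(\<Sum>y\<in>UNIV. t y) \<le> (\<Sum>x\<in>Xm \<union> X0. mvec A t x)"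
    and z_def: "\<forall>y. z y = t y * (1 / d + (\<Sum>x\<in>nbhd A y. max (1 / mvec A t x - 1 / d) 0))"
  shows "kappa_feasible A z \<and> p_dsu A t = (\<Sum>y\<in>UNIV. z y)
         \<and> (\<forall>y. phi A t y \<le> z y) \<and> kappa_ldu A t \<le> p_dsu A t"
proof -
  define a where "a = mvec A t"
  define T where "T = (\<Sum>y\<in>UNIV. t y)"
  define f where "f x = max (1 / a x - 1 / d) 0" for x
  have apos: "\<And>x. a x > 0" using Atpos a_def by auto
  have dpos: "d > 0"
  proof (rule ccontr)
    assume "\<not> d > 0"
    hence h: "\<not> mvec A t x < d \<and> mvec A t x \<noteq> d" for x using Atpos[rule_format, of x] by linarith
    have "Xm \<union> X0 = {}" using h by (simp add: Xm_def X0_def)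
    hence "T \<le> 0" using up T_def by simp
    moreover have "T \<ge> 0" unfolding T_def using tnn by (simp add: sum_nonneg)
    ultimately have "T = 0" by simp
    hence "\<forall>y\<in>UNIV. t y = 0" using tnn unfolding T_def by (subst sum_nonneg_eq_0_iff[symmetric]) auto
    hence "a x = 0" for x by (simp add: a_def mvec_def)
    thus False using apos by (metis less_irrefl)
  qed
  have fnn: "f x \<ge> 0" for x by (simp add: f_def)
  have z': "z y = t y * (1/d + (\<Sum>x\<in>nbhd A y. f x))" for y using z_def a_def f_def by simp
  have single: "z y \<ge> t y * (1/d + f x)" if "A x y = 1" for x y
  proof -
    have "x \<in> nbhd A y" using that by (simp add: nbhd_def)
    hence "f x \<le> (\<Sum>x\<in>nbhd A y. f x)" by (intro member_le_sum) (auto simp: fnn)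
    thus ?thesis using z' tnn by (simp add: mult_left_mono)
  qed
  have znn: "z y \<ge> 0" for y using z' tnn dpos fnn by (simp add: sum_nonneg)
  have A01: "A x y = 0 \<or> A x y = 1" for x y using chan by (simp add: comb_channel_def)
  have feas: "kappa_feasible A z"
    unfolding kappa_feasible_def
  proof (intro conjI allI)
    fix y show "z y \<ge> 0" by (rule znn)
  next
    fix x
    have "(\<Sum>y\<in>UNIV. A x y * (t y * (1/d + f x))) \<le> (\<Sum>y\<in>UNIV. A x y * z y)"
      by (intro sum_mono) (metis A01 single mult_zero_left mult_1 order_refl)
    moreover have "(\<Sum>y\<in>UNIV. A x y * (t y * (1/d + f x))) = a x * (1/d + f x)"
      unfolding a_def mvec_def sum_distrib_right by (simp add: mult_ac)
    moreover have "a x * (1/d + f x) \<ge> 1"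
    proof (cases "1 / a x - 1/d \<ge> 0")
      case True
      hence "a x * (1/d + f x) = 1" using apos[of x] by (simp add: f_def field_simps)
      thus ?thesis by simp
    next
      case False
      hence "a x \<ge> d" using apos[of x] dpos by (simp add: field_simps)
      hence "a x * (1/d + f x) \<ge> 1" using False dpos by (simp add: f_def field_simps)
      thus ?thesis .
    qed
    ultimately show "mvec A z x \<ge> 1" by (simp add: mvec_def)
  qed
  have fa: "f x * a x = (if x \<in> Xm then 1 - a x / d else 0)" for x
    using apos[of x] dpos unfolding f_def Xm_def a_def[symmetric]
    by (auto simp: field_simps max_def)
  define V where "V = T / d + (\<Sum>x\<in>Xm. 1 - a x / d)"
  have sumz: "(\<Sum>y\<in>UNIV. z y) = V"
  proof -
    have "(\<Sum>y\<in>UNIV. z y) = (\<Sum>y\<in>UNIV. t y / d + (\<Sum>x\<in>UNIV. A x y * (t y * f x)))"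
      using z' sum_nbhd[OF chan]
      by (simp add: algebra_simps sum_distrib_left)
    also have "\<dots> = T / d + (\<Sum>y\<in>UNIV. \<Sum>x\<in>UNIV. A x y * (t y * f x))"
      by (simp add: sum.distrib T_def sum_divide_distrib)
    also have "(\<Sum>y\<in>UNIV. \<Sum>x\<in>UNIV. A x y * (t y * f x)) = (\<Sum>x\<in>UNIV. \<Sum>y\<in>UNIV. A x y * (t y * f x))"
      by (rule sum.swap)
    also have "T / d + (\<Sum>x\<in>UNIV. \<Sum>y\<in>UNIV. A x y * (t y * f x)) = T / d + (\<Sum>x\<in>UNIV. f x * a x)"
      by (simp add: a_def mvec_def sum_distrib_left sum_distrib_right mult_ac)
    also have "\<dots> = V" by (simp add: fa V_def sum.If_cases)
    finally show ?thesis .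
  qed
  define S where "S = {(\<Sum>x\<in>UNIV. w x) | w. (\<forall>x. 0 \<le> w x \<and> w x \<le> 1)
        \<and> (\<Sum>y\<in>UNIV. t y * tvec A w y) \<le> (\<Sum>y\<in>UNIV. t y)}"
  have bound: "s \<le> V" if "s \<in> S" for s
  proof -
    obtain w where w: "s = (\<Sum>x\<in>UNIV. w x)" "\<forall>x. 0 \<le> w x \<and> w x \<le> 1"
      "(\<Sum>x\<in>UNIV. w x * a x) \<le> T"
      using \<open>s \<in> S\<close> unfolding S_def T_def a_def swap_tvec by auto
    have "w x \<le> w x * a x / d + (if x \<in> Xm then 1 - a x / d else 0)" for x
    proof -
      have e: "w x = w x * a x / d + w x * (1 - a x / d)" using dpos by (simp add: field_simps)
      have "w x * (1 - a x / d) \<le> (if x \<in> Xm then 1 - a x / d else 0)"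
      proof (cases "x \<in> Xm")
        case True
        hence "1 - a x / d \<ge> 0" using dpos by (simp add: Xm_def a_def field_simps)
        thus ?thesis using True w(2) by (simp add: mult_left_le_one_le)
      next
        case False
        hence "1 - a x / d \<le> 0" using dpos by (simp add: Xm_def a_def field_simps)
        thus ?thesis using False w(2) by (simp add: mult_nonneg_nonpos)
      qed
      thus ?thesis using e by linarith
    qed
    hence "s \<le> (\<Sum>x\<in>UNIV. w x * a x / d + (if x \<in> Xm then 1 - a x / d else 0))"
      using w(1) by (simp add: sum_mono)
    also have "\<dots> = (\<Sum>x\<in>UNIV. w x * a x) / d + (\<Sum>x\<in>Xm. 1 - a x / d)"
      by (simp add: sum.distrib sum_divide_distrib sum.If_cases)
    also have "\<dots> \<le> V" unfolding V_def using w(3) dpos by (simp add: divide_right_mono)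
    finally show ?thesis .
  qed
  have disj: "Xm \<inter> X0 = {}" by (auto simp: Xm_def X0_def)
  define SM where "SM = (\<Sum>x\<in>Xm. a x)"
  have sX0: "(\<Sum>x\<in>X0. a x) = real (card X0) * d" by (simp add: X0_def a_def)
  have up': "T \<le> SM + real (card X0) * d"
    using up disj sX0 by (simp add: T_def SM_def a_def[symmetric] sum.union_disjoint)
  have low': "SM \<le> T" using low by (simp add: T_def SM_def a_def)
  define th where "th = (T - SM) / (d * real (card X0))"
  define w where "w x = (if x \<in> Xm then 1 else if x \<in> X0 then th else 0)" for x
  have wsum: "(\<Sum>x\<in>UNIV. w x * g x) = (\<Sum>x\<in>Xm. g x) + th * (\<Sum>x\<in>X0. g x)" for g
  proof -
    have "(\<Sum>x\<in>UNIV. w x * g x) = (\<Sum>x\<in>UNIV. (if x \<in> Xm then g x else 0) + th * (if x \<in> X0 then g x else 0))"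
      using disj by (intro sum.cong) (auto simp: w_def)
    thus ?thesis by (simp add: sum.distrib sum_distrib_left[symmetric] sum.If_cases)
  qed
  have thb: "0 \<le> th \<and> th \<le> 1"
  proof (cases "card X0 = 0")
    case True thus ?thesis by (simp add: th_def)
  next
    case False
    hence "real (card X0) > 0" by (metis of_nat_0_less_iff neq0_conv)
    hence "d * real (card X0) > 0" using dpos by (simp add: zero_less_mult_iff)
    thus ?thesis using up' low' unfolding th_def by (simp add: field_simps)
  qed
  have wS: "V \<in> S"
  proof -
    have key: "th * (real (card X0) * d) = T - SM \<and> th * real (card X0) = (T - SM) / d"
    proof (cases "card X0 = 0")
      case True thus ?thesis using up' low' by (simp add: th_def)
    next
      case False thus ?thesis using dpos by (simp add: th_def field_simps)
    qed
    have "(\<Sum>x\<in>UNIV. w x) = (\<Sum>x\<in>UNIV. w x * 1)" by simp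
    also have "\<dots> = real (card Xm) + th * real (card X0)" by (simp only: wsum) simp
    also have "\<dots> = V" using key dpos
      by (simp add: V_def sum_subtractf sum_divide_distrib[symmetric] SM_def field_simps)
    finally have e1: "(\<Sum>x\<in>UNIV. w x) = V" .
    have "(\<Sum>y\<in>UNIV. t y * tvec A w y) = (\<Sum>x\<in>UNIV. w x * a x)" by (simp add: swap_tvec a_def)
    also have "\<dots> = T" using key sX0 by (simp only: wsum) (simp add: SM_def)
    finally have e2: "(\<Sum>y\<in>UNIV. t y * tvec A w y) \<le> (\<Sum>y\<in>UNIV. t y)" by (simp add: T_def)
    have "\<forall>x. 0 \<le> w x \<and> w x \<le> 1" using thb by (simp add: w_def)
    thus ?thesis using e1 e2 unfolding S_def by blast
  qed
  have pd: "p_dsu A t = V"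
    unfolding p_dsu_def S_def[symmetric] using wS bound by (intro cSup_eq_maximum) auto
  have ph: "phi A t y \<le> z y" for y
  proof -
    have ne: "nbhd A y \<noteq> {}" using chan by (auto simp: comb_channel_def nbhd_def)
    have "Min (a ` nbhd A y) \<in> a ` nbhd A y" using ne by (intro Min_in) auto
    then obtain x where x: "A x y = 1" "Min (a ` nbhd A y) = a x" by (auto simp: nbhd_def)
    have "1 / a x \<le> 1/d + f x" by (simp add: f_def)
    hence "t y * (1 / a x) \<le> t y * (1/d + f x)" using tnn by (intro mult_left_mono) auto
    thus ?thesis using single[OF x(1)] x(2) by (simp add: phi_def a_def[symmetric])
  qed
  have "kappa_ldu A t \<le> p_dsu A t"
    unfolding kappa_ldu_def pd sumz[symmetric] using ph by (intro sum_mono) auto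
  thus ?thesis using feas pd sumz ph by simp
qed

end
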